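(* Let $l$ be a prime number, let $\mathcal{T}_l\cong\prod_{k\in\mathbb{N}}\mathbb{Z}/l^k\mathbb{Z}$, let $A$ be a finite abelian $l$-group, and let $\mathcal{D}$ be a pro-$l$ abelian group with an exact sequence of pro-$l$ abelian groups $0\to\mathcal{T}_l\to\mathcal{D}\xrightarrow{\pi} A\to 0$ such that the topological closure of the torsion subgroup of $\mathcal{D}$ equals the image of $\mathcal{T}_l$. Let $X^{\vee}=\mathrm{Hom}_{cont}(X,\mathbb{R}/\mathbb{Z})$ denote the Pontryagin dual, and regard $A^{\vee}$ as a subgroup of $\mathcal{D}^{\vee}$ via the injection $\pi^{\vee}$. Then for every non-zero $x\in A^{\vee}$ and every natural number $n$ there exists $c_x\in\mathcal{D}^{\vee}$ with $l^n c_x=x$. *)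

theory Defs
  imports "HOL-Analysis.Analysis" "HOL-Algebra.Algebra"
begin

definition topological_group :: "('a, 'b) monoid_scheme \<Rightarrow> 'a topology \<Rightarrow> bool" where
  "topological_group G T \<longleftrightarrow> group G \<and> topspace T = carrier G \<and>
     continuous_map (prod_topology T T) T (\<lambda>p. fst p \<otimes>\<^bsub>G\<^esub> snd p) \<and>
     continuous_map T T (\<lambda>x. inv\<^bsub>G\<^esub> x)"

definition pro_l_group :: "nat \<Rightarrow> ('a, 'b) monoid_scheme \<Rightarrow> 'a topology \<Rightarrow> bool" where
  "pro_l_group l G T \<longleftrightarrow> topological_group G T \<and> compact_space T \<and> Hausdorff_space T \<and>
     (\<forall>x\<in>topspace T. connected_component_of_set T x = {x}) \<and>
     (\<forall>H. subgroup H G \<and> normal H G \<and> openin T H \<longrightarrow> (\<exists>k. card (rcosets\<^bsub>G\<^esub> H) = l ^ k))"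

definition Tl_group :: "nat \<Rightarrow> (nat \<Rightarrow> int) monoid" where
  "Tl_group l = \<lparr>carrier = PiE UNIV (\<lambda>k. {0..<int l ^ k}),
                  mult = (\<lambda>f g. \<lambda>k. (f k + g k) mod (int l ^ k)),
                  one = (\<lambda>k. 0)\<rparr>"

definition Tl_top :: "nat \<Rightarrow> (nat \<Rightarrow> int) topology" where
  "Tl_top l = product_topology (\<lambda>k. discrete_topology {0..<int l ^ k}) UNIV"

(* Continuous characters G -> R/Z, with R/Z identified with the unit circle in C
   (t mod 1 \<mapsto> exp(2 pi i t)); the dual group operation is pointwise multiplication. *)
definition continuous_character ::
  "('a, 'b) monoid_scheme \<Rightarrow> 'a topology \<Rightarrow> ('a \<Rightarrow> complex) \<Rightarrow> bool" where
  "continuous_character G T chr \<longleftrightarrow>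
     continuous_map T (top_of_set (sphere (0::complex) 1)) chr \<and>
     (\<forall>x\<in>carrier G. \<forall>y\<in>carrier G. chr (x \<otimes>\<^bsub>G\<^esub> y) = chr x * chr y)"

end

theory Submission imports Defs begin


definition chr_on :: "('a,'b) monoid_scheme \<Rightarrow> 'a set \<Rightarrow> ('a \<Rightarrow> complex) \<Rightarrow> bool" where
 "chr_on G H \<psi> \<longleftrightarrow> (\<forall>a\<in>H. \<forall>b\<in>H. \<psi> (a \<otimes>\<^bsub>G\<^esub> b) = \<psi> a * \<psi> b) \<and> (\<forall>a\<in>H. norm (\<psi> a) = 1)"

lemma (in group) subgroup_pow_closed:
  assumes "subgroup H G" "a \<in> H" shows "a [^] (q::nat) \<in> H"
  using assms by (induction q) (auto simp: subgroup.one_closed subgroup.m_closed)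

lemma (in group) chr_pow:
  assumes "subgroup H G" "chr_on G H \<psi>" "a \<in> H"
  shows "\<psi> (a [^] (q::nat)) = \<psi> a ^ q"
proof (induction q)
  case 0
  have o: "\<one> \<in> H" using subgroup.one_closed[OF assms(1)] .
  have "\<psi> \<one> = \<psi> \<one> * \<psi> \<one>" using assms(2) o unfolding chr_on_def
    by (metis l_one one_closed)
  moreover have "\<psi> \<one> \<noteq> 0" using assms(2) o unfolding chr_on_def by force
  ultimately show ?case by simp
next
  case (Suc q)
  then show ?case using assms subgroup_pow_closed[OF assms(1) assms(3), of q] unfolding chr_on_def
    by (simp add: mult.commute)
qed

lemma (in group) chr_one:
  assumes "subgroup H G" "chr_on G H \<psi>"
  shows "\<psi> \<one> = 1"
  using chr_pow[OF assms subgroup.one_closed[OF assms(1)], of 0] by simp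

lemma (in comm_group) mult4:
  assumes "a \<in> carrier G" "b \<in> carrier G" "c \<in> carrier G" "d \<in> carrier G"
  shows "(a \<otimes> b) \<otimes> (c \<otimes> d) = (a \<otimes> c) \<otimes> (b \<otimes> d)"
  using assms by (simp add: m_ac)

lemma (in comm_group) chr_ext_step:
  assumes H: "subgroup H G" and psi: "chr_on G H \<psi>" and g: "g \<in> carrier G"
    and m: "0 < m" "g [^] (m::nat) \<in> H"
  shows "\<exists>H' \<psi>'. subgroup H' G \<and> H \<subseteq> H' \<and> g \<in> H' \<and> chr_on G H' \<psi>' \<and> (\<forall>a\<in>H. \<psi>' a = \<psi> a)"
proof -
  define k where "k = (LEAST k::nat. 0 < k \<and> g [^] k \<in> H)"
  have k: "0 < k" "g [^] k \<in> H" using LeastI[of "\<lambda>k. 0<k \<and> g[^]k \<in> H" m] m unfolding k_def by auto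
  have kmin: "g [^] j \<notin> H" if "0 < j" "j < k" for j
    using not_less_Least[of j "\<lambda>k. 0<k \<and> g[^]k \<in> H"] that unfolding k_def by auto
  have Hc: "H \<subseteq> carrier G" using subgroup.subset[OF H] .
  define z where "z = \<psi> (g [^] k)"
  have nz: "norm z = 1" using psi k unfolding chr_on_def z_def by auto
  define w where "w = exp (Ln z / of_nat k)"
  have wk: "w ^ k = z"
  proof -
    have "w ^ k = exp (of_nat k * (Ln z / of_nat k))" unfolding w_def by (simp only: exp_of_nat_mult)
    also have "\<dots> = exp (Ln z)" using k by simp
    also have "\<dots> = z" using nz by (intro exp_Ln) auto
    finally show ?thesis .
  qed
  have nw: "norm w = 1"
  proof -
    have "norm w ^ k = norm (w ^ k)" by (rule norm_power[symmetric])
    also have "\<dots> = 1" using wk nz by simp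
    finally have "norm w ^ k = 1" .
    thus ?thesis using k power_eq_imp_eq_base[of "norm w" k 1] by simp
  qed
  have uniq0: "h1 = h2 \<and> j1 = j2" if "h1 \<in> H" "h2 \<in> H" "j1 < k" "j2 < k" "j1 \<le> j2"
    "h1 \<otimes> g [^] j1 = h2 \<otimes> g [^] j2" for h1 h2 j1 j2
  proof -
    have c: "h1 \<in> carrier G" "h2 \<in> carrier G" using that Hc by auto
    have "g [^] j2 = g [^] j1 \<otimes> g [^] (j2 - j1)" using that g by (simp add: nat_pow_mult)
    hence "h1 \<otimes> g [^] j1 = (h2 \<otimes> g [^] (j2 - j1)) \<otimes> g [^] j1" using that c g
      by (simp add: m_ac)
    hence e: "h1 = h2 \<otimes> g [^] (j2 - j1)"
      using right_cancel[of "g [^] j1" h1 "h2 \<otimes> g [^] (j2 - j1)"] c g by simp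
    hence "g [^] (j2 - j1) = inv h2 \<otimes> h1"
      using inv_solve_left[of "g [^] (j2 - j1)" h2 h1] c g by simp
    moreover have "inv h2 \<otimes> h1 \<in> H"
      using subgroup.m_closed[OF H subgroup.m_inv_closed[OF H that(2)] that(1)] .
    ultimately have "g [^] (j2 - j1) \<in> H" by simp
    hence "j2 - j1 = 0" using kmin that by (meson diff_le_self le_less_trans not_gr0)
    thus ?thesis using e that c by auto
  qed
  have uniq: "h1 = h2 \<and> j1 = j2" if "h1 \<in> H" "h2 \<in> H" "j1 < k" "j2 < k"
    "h1 \<otimes> g [^] j1 = h2 \<otimes> g [^] j2" for h1 h2 j1 j2
  proof (cases "j1 \<le> j2")
    case True
    then show ?thesis using uniq0[of h1 h2 j1 j2] that by blast
  next
    case False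
    then show ?thesis using uniq0[of h2 h1 j2 j1] that by auto
  qed
  define \<psi>' where "\<psi>' y = (let p = (SOME p. fst p \<in> H \<and> snd p < k \<and> y = fst p \<otimes> g [^] snd p) in \<psi> (fst p) * w ^ (snd p))" for y
  have key: "\<psi>' (h \<otimes> g [^] j) = \<psi> h * w ^ j" if "h \<in> H" for h j
  proof -
    define q where "q = j div k"
    define r where "r = j mod k"
    have hc: "h \<in> carrier G" using that Hc by auto
    have j: "j = k * q + r" unfolding q_def r_def by simp
    have rk: "r < k" unfolding r_def using k by simp
    define h0 where "h0 = h \<otimes> (g [^] k) [^] q"
    have h0: "h0 \<in> H" unfolding h0_def using subgroup.m_closed[OF H that subgroup_pow_closed[OF H k(2)]] .
    have eq: "h \<otimes> g [^] j = h0 \<otimes> g [^] r" unfolding h0_def j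
      using hc g nat_pow_mult[of g "k * q" r] nat_pow_pow[of g k q] by (simp add: m_assoc)
    let ?P = "\<lambda>p. fst p \<in> H \<and> snd p < k \<and> h \<otimes> g [^] j = fst p \<otimes> g [^] snd p"
    have "?P (h0, r)" using h0 rk eq by simp
    hence P: "?P (SOME p. ?P p)" by (rule someI)
    hence "fst (SOME p. ?P p) = h0 \<and> snd (SOME p. ?P p) = r" using uniq[of "fst (SOME p. ?P p)" h0 "snd (SOME p. ?P p)" r] h0 rk eq by auto
    hence "\<psi>' (h \<otimes> g [^] j) = \<psi> h0 * w ^ r" unfolding \<psi>'_def Let_def by simp
    also have "\<dots> = \<psi> h * z ^ q * w ^ r" unfolding h0_def z_def
      using psi that chr_pow[OF H psi k(2)] subgroup_pow_closed[OF H k(2)] unfolding chr_on_def by simp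
    also have "\<dots> = \<psi> h * w ^ j" unfolding j wk[symmetric] by (simp add: power_add power_mult)
    finally show ?thesis .
  qed
  define H' where "H' = {h \<otimes> g [^] (j::nat) | h j. h \<in> H}"
  have H'c: "H' \<subseteq> carrier G" unfolding H'_def using Hc g by (auto simp: subsetD)
  have sub: "subgroup H' G"
  proof (rule subgroupI)
    show "H' \<subseteq> carrier G" by (fact H'c)
    show "H' \<noteq> {}" unfolding H'_def using subgroup.one_closed[OF H] by blast
  next
    fix a b assume "a \<in> H'" "b \<in> H'"
    then obtain h1 j1 h2 j2 where a: "a = h1 \<otimes> g [^] (j1::nat)" "h1 \<in> H" and b: "b = h2 \<otimes> g [^] (j2::nat)" "h2 \<in> H"
      unfolding H'_def by auto
    have hc: "h1 \<in> carrier G" "h2 \<in> carrier G" using a b Hc by auto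
    have "a \<otimes> b = (h1 \<otimes> h2) \<otimes> (g [^] j1 \<otimes> g [^] j2)"
      unfolding a(1) b(1) using mult4[of h1 "g [^] j1" h2 "g [^] j2"] hc g by simp
    hence "a \<otimes> b = (h1 \<otimes> h2) \<otimes> g [^] (j1 + j2)" using g by (simp add: nat_pow_mult)
    moreover have "h1 \<otimes> h2 \<in> H" using subgroup.m_closed[OF H a(2) b(2)] .
    ultimately show "a \<otimes> b \<in> H'" unfolding H'_def by blast
  next
    fix a assume "a \<in> H'"
    then obtain h j where a: "a = h \<otimes> g [^] (j::nat)" "h \<in> H" unfolding H'_def by auto
    have hc: "h \<in> carrier G" using a Hc by auto
    have kj: "k * j - j + j = k * j" using k by (cases k) auto
    have q: "g [^] (k * j - j) \<otimes> g [^] j = g [^] (k * j)" using g nat_pow_mult[of g "k * j - j" j] kj by simp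
    have p: "(g [^] k) [^] j = g [^] (k * j)" using g by (simp add: nat_pow_pow)
    define Xg where "Xg = inv ((g [^] k) [^] j) \<otimes> g [^] (k * j - j)"
    have "Xg \<otimes> g [^] j = inv (g [^] (k * j)) \<otimes> (g [^] (k * j - j) \<otimes> g [^] j)"
      unfolding Xg_def p using g by (simp add: m_assoc)
    also have "\<dots> = \<one>" unfolding q using g by simp
    finally have "inv (g [^] j) = Xg" using inv_equality[of Xg "g [^] j"] g unfolding Xg_def by simp
    hence "inv a = inv h \<otimes> Xg" unfolding a(1) using hc g by (simp add: inv_mult)
    hence "inv a = (inv h \<otimes> inv ((g [^] k) [^] j)) \<otimes> g [^] (k * j - j)"
      unfolding Xg_def using hc g by (simp add: m_assoc)
    moreover have "inv h \<otimes> inv ((g [^] k) [^] j) \<in> H"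
      using subgroup.m_closed[OF H subgroup.m_inv_closed[OF H a(2)] subgroup.m_inv_closed[OF H subgroup_pow_closed[OF H k(2)]]] .
    ultimately show "inv a \<in> H'" unfolding H'_def by blast
  qed
  have chr: "chr_on G H' \<psi>'" unfolding chr_on_def
  proof (intro conjI ballI)
    fix a b assume "a \<in> H'" "b \<in> H'"
    then obtain h1 j1 h2 j2 where a: "a = h1 \<otimes> g [^] (j1::nat)" "h1 \<in> H" and b: "b = h2 \<otimes> g [^] (j2::nat)" "h2 \<in> H"
      unfolding H'_def by auto
    have hc: "h1 \<in> carrier G" "h2 \<in> carrier G" using a b Hc by auto
    have "a \<otimes> b = (h1 \<otimes> h2) \<otimes> (g [^] j1 \<otimes> g [^] j2)"
      unfolding a(1) b(1) using mult4[of h1 "g [^] j1" h2 "g [^] j2"] hc g by simp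
    hence "a \<otimes> b = (h1 \<otimes> h2) \<otimes> g [^] (j1 + j2)" using g by (simp add: nat_pow_mult)
    moreover have "h1 \<otimes> h2 \<in> H" using subgroup.m_closed[OF H a(2) b(2)] .
    ultimately show "\<psi>' (a \<otimes> b) = \<psi>' a * \<psi>' b" using key a b psi unfolding chr_on_def
      by (simp add: power_add)
  next
    fix a assume "a \<in> H'"
    then obtain h j where a: "a = h \<otimes> g [^] (j::nat)" "h \<in> H" unfolding H'_def by auto
    show "norm (\<psi>' a) = 1" using key a psi nw unfolding chr_on_def by (simp add: norm_mult norm_power)
  qed
  have "H \<subseteq> H'" unfolding H'_def using Hc by (force intro: exI[of _ 0])
  moreover have "g \<in> H'" unfolding H'_def using subgroup.one_closed[OF H] g
    by (force intro!: exI[of _ "\<one>"] exI[of _ 1])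
  moreover have "\<forall>a\<in>H. \<psi>' a = \<psi> a"
  proof
    fix a assume a: "a \<in> H"
    hence "a \<otimes> g [^] (0::nat) = a" using Hc by auto
    thus "\<psi>' a = \<psi> a" using key[OF a, of 0] by simp
  qed
  ultimately show ?thesis using sub chr by blast
qed

lemma (in comm_group) chr_ext_finite:
  assumes "finite F" "F \<subseteq> carrier G" "subgroup H G" "chr_on G H \<psi>"
    "\<And>g. g\<in>carrier G \<Longrightarrow> \<exists>m>0. g [^] (m::nat) \<in> H"
  shows "\<exists>H' \<psi>'. subgroup H' G \<and> H \<subseteq> H' \<and> F \<subseteq> H' \<and> chr_on G H' \<psi>' \<and> (\<forall>a\<in>H. \<psi>' a = \<psi> a)"
  using assms(1,2)
proof (induction F)
  case empty
  show ?case using assms(3,4) by (intro exI[of _ H] exI[of _ \<psi>]) auto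
next
  case (insert x F)
  have Fc: "F \<subseteq> carrier G" and xc: "x \<in> carrier G" using insert.prems by auto
  obtain H1 \<psi>1 where h1: "subgroup H1 G" "H \<subseteq> H1" "F \<subseteq> H1" "chr_on G H1 \<psi>1" "\<forall>a\<in>H. \<psi>1 a = \<psi> a"
    using insert.IH[OF Fc] by blast
  obtain m where m: "m > 0" "x [^] (m::nat) \<in> H" using assms(5)[OF xc] by blast
  have m2: "x [^] m \<in> H1" using m h1(2) by blast
  obtain H2 \<psi>2 where h2: "subgroup H2 G" "H1 \<subseteq> H2" "x \<in> H2" "chr_on G H2 \<psi>2" "\<forall>a\<in>H1. \<psi>2 a = \<psi>1 a"
    using chr_ext_step[OF h1(1) h1(4) xc m(1) m2] by blast
  have "H \<subseteq> H2" "insert x F \<subseteq> H2" using h1 h2 by auto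
  moreover have "\<forall>a\<in>H. \<psi>2 a = \<psi> a" using h1 h2 by auto
  ultimately show ?case using h2 by blast
qed


theorem lemma1:
  fixes l :: nat and n :: nat
    and D :: "('d, 'e) monoid_scheme" and TD :: "'d topology"
    and A :: "('a, 'c) monoid_scheme"
    and \<iota> :: "(nat \<Rightarrow> int) \<Rightarrow> 'd" and \<pi> :: "'d \<Rightarrow> 'a"
    and x :: "'a \<Rightarrow> complex"
  assumes "Factorial_Ring.prime l"
    and "comm_group A" and "finite (carrier A)" and "\<exists>m. card (carrier A) = l ^ m"
    and "comm_group D" and "pro_l_group l D TD"
    and "\<iota> \<in> hom (Tl_group l) D" and "inj_on \<iota> (carrier (Tl_group l))"
    and "continuous_map (Tl_top l) TD \<iota>"
    and "\<pi> \<in> hom D A" and "\<pi> ` carrier D = carrier A"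
    and "continuous_map TD (discrete_topology (carrier A)) \<pi>"
    and "\<iota> ` carrier (Tl_group l) = {d \<in> carrier D. \<pi> d = \<one>\<^bsub>A\<^esub>}"
    and "TD closure_of {d \<in> carrier D. \<exists>k::nat. k > 0 \<and> d [^]\<^bsub>D\<^esub> k = \<one>\<^bsub>D\<^esub>}
           = \<iota> ` carrier (Tl_group l)"
    and "continuous_character A (discrete_topology (carrier A)) x"
    and "\<exists>a\<in>carrier A. x a \<noteq> 1"
  shows "\<exists>c. continuous_character D TD c \<and> (\<forall>d\<in>carrier D. c d ^ (l ^ n) = x (\<pi> d))"
proof -
  note prl = assms(1) and cgA = assms(2) and cgD = assms(5) and pro = assms(6)
    and iota_hom = assms(7) and iota_inj = assms(8) and iota_cont = assms(9)
    and pi_hom = assms(10) and pi_cont = assms(12) and kerpi = assms(13) and clos = assms(14)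
    and xchr = assms(15)
  interpret D: comm_group D by (fact cgD)
  interpret A: comm_group A by (fact cgA)
  have l1: "l > 1" using prl prime_gt_1_nat by blast
  define m where "m = l ^ n"
  have m0: "m > 0" using l1 unfolding m_def by simp
  have tg: "topological_group D TD" and cpt: "compact_space TD" and hd: "Hausdorff_space TD"
    using pro unfolding pro_l_group_def by auto
  have topD: "topspace TD = carrier D" using tg unfolding topological_group_def by auto
  have multc: "continuous_map (prod_topology TD TD) TD (\<lambda>p. fst p \<otimes>\<^bsub>D\<^esub> snd p)"
    using tg unfolding topological_group_def by auto
  have transl: "continuous_map TD TD (\<lambda>y. a \<otimes>\<^bsub>D\<^esub> y)" if "a \<in> carrier D" for a
  proof -
    have "continuous_map TD (prod_topology TD TD) (\<lambda>y. (a, y))"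
      using that topD by (intro continuous_map_pairedI) auto
    from continuous_map_compose[OF this multc] show ?thesis by (simp add: o_def)
  qed
  have powc: "continuous_map TD TD (\<lambda>y. y [^]\<^bsub>D\<^esub> (j::nat))" for j
  proof (induction j)
    case 0
    then show ?case using topD by simp
  next
    case (Suc j)
    have "continuous_map TD (prod_topology TD TD) (\<lambda>y. (y [^]\<^bsub>D\<^esub> j, y))"
      using Suc by (intro continuous_map_pairedI) auto
    from continuous_map_compose[OF this multc] show ?case by (simp add: o_def)
  qed
  define Tl where "Tl = Tl_group l"
  define T where "T = Tl_top l"
  have lk: "(0::int) < int l ^ k" for k using l1 by simp
  have carT: "carrier Tl = PiE UNIV (\<lambda>k. {0..<int l ^ k})" unfolding Tl_def Tl_group_def by simp
  have topT: "topspace T = carrier Tl" unfolding T_def Tl_top_def carT by simp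
  have cptT: "compact_space T" unfolding T_def Tl_top_def
    by (simp add: compact_space_product_topology compact_space_discrete_topology)
  have multT: "f \<otimes>\<^bsub>Tl\<^esub> g = (\<lambda>k. (f k + g k) mod (int l ^ k))" for f g unfolding Tl_def Tl_group_def by simp
  have oneT: "\<one>\<^bsub>Tl\<^esub> = (\<lambda>k. 0)" unfolding Tl_def Tl_group_def by simp
  have oneTc: "(\<lambda>k. 0::int) \<in> carrier Tl" unfolding carT using lk by auto
  have iota_c: "\<iota> f \<in> carrier D" if "f \<in> carrier Tl" for f
    using iota_hom that unfolding Tl_def hom_def by auto
  have iota_m: "\<iota> (f \<otimes>\<^bsub>Tl\<^esub> g) = \<iota> f \<otimes>\<^bsub>D\<^esub> \<iota> g" if "f \<in> carrier Tl" "g \<in> carrier Tl" for f g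
    using iota_hom that unfolding Tl_def hom_def by auto
  have iota1: "\<iota> (\<lambda>k. 0) = \<one>\<^bsub>D\<^esub>"
  proof -
    have "(\<lambda>k. 0::int) \<otimes>\<^bsub>Tl\<^esub> (\<lambda>k. 0) = (\<lambda>k. 0)" unfolding multT by simp
    hence "\<iota> (\<lambda>k. 0) \<otimes>\<^bsub>D\<^esub> \<iota> (\<lambda>k. 0) = \<iota> (\<lambda>k. 0)" using iota_m[OF oneTc oneTc] by simp
    thus ?thesis using iota_c[OF oneTc] D.right_cancel[of "\<iota> (\<lambda>k. 0)" "\<iota> (\<lambda>k. 0)" "\<one>\<^bsub>D\<^esub>"] by simp
  qed
  define U where "U K = {f \<in> carrier Tl. \<forall>k<K. f k = 0}" for K
  have UT: "U K \<subseteq> carrier Tl" for K unfolding U_def by auto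
  have Uoc: "openin T (U K) \<and> closedin T (U K)" for K
  proof (induction K)
    case 0
    then show ?case unfolding U_def using topT by (simp flip: topT)
  next
    case (Suc K)
    have pc: "continuous_map T (discrete_topology {0..<int l ^ K}) (\<lambda>f. f K)"
      unfolding T_def Tl_top_def using continuous_map_product_projection[of K UNIV "\<lambda>k. discrete_topology {0..<int l ^ k}"] by simp
    have 0: "{0} \<subseteq> {0..<int l ^ K}" using lk by simp
    have o: "openin T {f \<in> topspace T. f K \<in> {0}}" by (rule openin_continuous_map_preimage[OF pc]) (use 0 in simp)
    have c: "closedin T {f \<in> topspace T. f K \<in> {0}}" by (rule closedin_continuous_map_preimage[OF pc]) (use 0 in simp)
    have "U (Suc K) = U K \<inter> {f \<in> topspace T. f K \<in> {0}}" unfolding U_def topT using less_Suc_eq by auto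
    then show ?case using Suc o c by auto
  qed
  have closedmap: "closedin TD (\<iota> ` C)" if "closedin T C" for C
    using compactin_imp_closedin[OF hd image_compactin[OF closedin_compact_space[OF cptT that]]] iota_cont
    unfolding T_def by blast
  define N where "N = \<iota> ` carrier Tl"
  have Nopen: "openin TD N"
  proof -
    have "openin TD {d \<in> topspace TD. \<pi> d \<in> {\<one>\<^bsub>A\<^esub>}}"
      by (rule openin_continuous_map_preimage[OF pi_cont]) simp
    thus ?thesis unfolding N_def Tl_def kerpi topD by simp
  qed
  define V where "V K = \<iota> ` U K" for K
  have Vclosed: "closedin TD (V K)" for K unfolding V_def using closedmap Uoc by blast
  have Vopen: "openin TD (V K)" for K
  proof -
    have "closedin T (topspace T - U K)" using Uoc by (simp add: closedin_diff)
    hence "closedin T (carrier Tl - U K)" using topT by simp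
    hence cl: "closedin TD (\<iota> ` (carrier Tl - U K))" by (rule closedmap)
    have "V K = N - \<iota> ` (carrier Tl - U K)" unfolding V_def N_def
      using iota_inj UT unfolding Tl_def inj_on_def by blast
    thus ?thesis using Nopen cl by (simp add: openin_diff)
  qed
  have Vsub: "subgroup (V K) D" for K
  proof (rule D.subgroupI)
    show "V K \<subseteq> carrier D" unfolding V_def using UT iota_c by blast
    show "V K \<noteq> {}" unfolding V_def U_def using oneTc by auto
  next
    fix a b assume "a \<in> V K" "b \<in> V K"
    then obtain f g where fg: "a = \<iota> f" "b = \<iota> g" "f \<in> U K" "g \<in> U K" unfolding V_def by auto
    have "f \<otimes>\<^bsub>Tl\<^esub> g \<in> U K" using fg unfolding U_def carT multT using lk
      by (auto simp: PiE_iff)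
    moreover have fgc: "f \<in> carrier Tl" "g \<in> carrier Tl" using fg UT by auto
    moreover have "a \<otimes>\<^bsub>D\<^esub> b = \<iota> (f \<otimes>\<^bsub>Tl\<^esub> g)" using fg iota_m[OF fgc] by simp
    ultimately show "a \<otimes>\<^bsub>D\<^esub> b \<in> V K" unfolding V_def by blast
  next
    fix a assume "a \<in> V K"
    then obtain f where f: "a = \<iota> f" "f \<in> U K" unfolding V_def by auto
    define g where "g = (\<lambda>k. (- f k) mod (int l ^ k))"
    have gU: "g \<in> U K" using f lk unfolding U_def carT g_def by (auto simp: PiE_iff)
    have "f \<otimes>\<^bsub>Tl\<^esub> g = (\<lambda>k. 0)" unfolding multT g_def by (simp add: mod_add_right_eq)
    moreover have fgc: "f \<in> carrier Tl" "g \<in> carrier Tl" using f gU UT by auto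
    ultimately have "\<iota> f \<otimes>\<^bsub>D\<^esub> \<iota> g = \<one>\<^bsub>D\<^esub>" using iota_m[OF fgc] iota1 by simp
    hence "\<iota> g \<otimes>\<^bsub>D\<^esub> \<iota> f = \<one>\<^bsub>D\<^esub>" using D.m_comm[OF iota_c[OF fgc(1)] iota_c[OF fgc(2)]] by simp
    hence "inv\<^bsub>D\<^esub> (\<iota> f) = \<iota> g" using D.inv_equality iota_c fgc by blast
    hence "inv\<^bsub>D\<^esub> a = \<iota> g" using f by simp
    thus "inv\<^bsub>D\<^esub> a \<in> V K" using gU unfolding V_def by blast
  qed
  have "\<exists>K. \<forall>d\<in>carrier D. d [^]\<^bsub>D\<^esub> m \<in> V K \<longrightarrow> \<pi> d = \<one>\<^bsub>A\<^esub>"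
  proof (rule ccontr)
    assume nK: "\<not> ?thesis"
    define S where "S K = {d \<in> topspace TD. d [^]\<^bsub>D\<^esub> m \<in> V K} \<inter> {d \<in> topspace TD. \<pi> d \<in> carrier A - {\<one>\<^bsub>A\<^esub>}}" for K
    have Scl: "closedin TD (S K)" for K unfolding S_def
    proof (rule closedin_Int)
      show "closedin TD {d \<in> topspace TD. d [^]\<^bsub>D\<^esub> m \<in> V K}"
        by (rule closedin_continuous_map_preimage[OF powc Vclosed])
      show "closedin TD {d \<in> topspace TD. \<pi> d \<in> carrier A - {\<one>\<^bsub>A\<^esub>}}"
        by (rule closedin_continuous_map_preimage[OF pi_cont]) simp
    qed
    have Sne: "S K \<noteq> {}" for K
    proof -
      obtain d where "d \<in> carrier D" "d [^]\<^bsub>D\<^esub> m \<in> V K" "\<pi> d \<noteq> \<one>\<^bsub>A\<^esub>" using nK by blast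
      moreover have "\<pi> d \<in> carrier A" using pi_hom \<open>d \<in> carrier D\<close> unfolding hom_def by auto
      ultimately show ?thesis unfolding S_def topD by blast
    qed
    have Sdec: "decseq S" unfolding S_def V_def U_def
      by (rule decseq_SucI) auto
    have "(\<Inter>K. S K) \<noteq> {}" by (rule compact_space_imp_nest[of TD S, OF cpt Scl Sne Sdec])
    then obtain d where d: "\<And>K. d \<in> S K" by blast
    have dc: "d \<in> carrier D" and pid: "\<pi> d \<noteq> \<one>\<^bsub>A\<^esub>" using d[of 0] unfolding S_def topD by auto
    obtain f where f: "d [^]\<^bsub>D\<^esub> m = \<iota> f" "f \<in> U 0" using d[of 0] unfolding S_def V_def by auto
    have fU: "f \<in> U K" for K
    proof -
      obtain f' where f': "d [^]\<^bsub>D\<^esub> m = \<iota> f'" "f' \<in> U K" using d[of K] unfolding S_def V_def by auto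
      have fc: "f' \<in> carrier Tl" "f \<in> carrier Tl" using f'(2) f(2) UT by auto
      have ii: "inj_on \<iota> (carrier Tl)" using iota_inj unfolding Tl_def .
      have "\<iota> f' = \<iota> f" using f'(1) f(1) by simp
      hence "f' = f" using inj_onD[OF ii _ fc(1) fc(2)] by blast
      thus ?thesis using f'(2) by simp
    qed
    have "f k = 0" for k using fU[of "Suc k"] unfolding U_def by simp
    hence "f = (\<lambda>k. 0)" by (simp add: fun_eq_iff)
    hence "d [^]\<^bsub>D\<^esub> m = \<one>\<^bsub>D\<^esub>" using f iota1 by simp
    hence "d \<in> {d \<in> carrier D. \<exists>k::nat. k > 0 \<and> d [^]\<^bsub>D\<^esub> k = \<one>\<^bsub>D\<^esub>}" using dc m0 by blast
    hence "d \<in> TD closure_of {d \<in> carrier D. \<exists>k::nat. k > 0 \<and> d [^]\<^bsub>D\<^esub> k = \<one>\<^bsub>D\<^esub>}"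
      using closure_of_subset[of "{d \<in> carrier D. \<exists>k::nat. k > 0 \<and> d [^]\<^bsub>D\<^esub> k = \<one>\<^bsub>D\<^esub>}" TD] topD by auto
    hence "d \<in> {d \<in> carrier D. \<pi> d = \<one>\<^bsub>A\<^esub>}" unfolding clos kerpi .
    hence "\<pi> d = \<one>\<^bsub>A\<^esub>" by simp
    thus False using pid by simp
  qed
  then obtain K where K: "\<And>d. d \<in> carrier D \<Longrightarrow> d [^]\<^bsub>D\<^esub> m \<in> V K \<Longrightarrow> \<pi> d = \<one>\<^bsub>A\<^esub>" by blast
  define VV where "VV = V K"
  have VVs: "subgroup VV D" unfolding VV_def by (rule Vsub)
  have VVc: "VV \<subseteq> carrier D" using subgroup.subset[OF VVs] .
  have VVo: "openin TD VV" unfolding VV_def by (rule Vopen)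
  have pic: "\<pi> d \<in> carrier A" if "d \<in> carrier D" for d using pi_hom that unfolding hom_def by auto
  have pim: "\<pi> (a \<otimes>\<^bsub>D\<^esub> b) = \<pi> a \<otimes>\<^bsub>A\<^esub> \<pi> b" if "a \<in> carrier D" "b \<in> carrier D" for a b
    using pi_hom that unfolding hom_def by auto
  have xm: "x (a \<otimes>\<^bsub>A\<^esub> b) = x a * x b" if "a \<in> carrier A" "b \<in> carrier A" for a b
    using xchr that unfolding continuous_character_def by auto
  have xn: "norm (x a) = 1" if "a \<in> carrier A" for a
    using xchr that unfolding continuous_character_def continuous_map_def by auto
  have x1: "x \<one>\<^bsub>A\<^esub> = 1"
  proof -
    have "x \<one>\<^bsub>A\<^esub> = x \<one>\<^bsub>A\<^esub> * x \<one>\<^bsub>A\<^esub>" using xm[of "\<one>\<^bsub>A\<^esub>" "\<one>\<^bsub>A\<^esub>"] by simp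
    moreover have "x \<one>\<^bsub>A\<^esub> \<noteq> 0" using xn[of "\<one>\<^bsub>A\<^esub>"] by force
    ultimately show ?thesis by simp
  qed
  have wd: "\<pi> d = \<pi> d'" if "d \<in> carrier D" "d' \<in> carrier D" "v \<in> VV" "v' \<in> VV"
      "d [^]\<^bsub>D\<^esub> m \<otimes>\<^bsub>D\<^esub> v = d' [^]\<^bsub>D\<^esub> m \<otimes>\<^bsub>D\<^esub> v'" for d d' v v'
  proof -
    have vc: "v \<in> carrier D" "v' \<in> carrier D" using that VVc by auto
    define P where "P = d' [^]\<^bsub>D\<^esub> m"
    define W where "W = v' \<otimes>\<^bsub>D\<^esub> inv\<^bsub>D\<^esub> v"
    have Pc: "P \<in> carrier D" unfolding P_def using that by simp
    have Wc: "W \<in> carrier D" unfolding W_def using vc by simp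
    have "d [^]\<^bsub>D\<^esub> m = (P \<otimes>\<^bsub>D\<^esub> v') \<otimes>\<^bsub>D\<^esub> inv\<^bsub>D\<^esub> v"
      using D.inv_solve_right[of "d [^]\<^bsub>D\<^esub> m" "P \<otimes>\<^bsub>D\<^esub> v'" v] that(1,5) vc Pc unfolding P_def by auto
    hence dm: "d [^]\<^bsub>D\<^esub> m = P \<otimes>\<^bsub>D\<^esub> W" unfolding W_def using Pc vc by (simp add: D.m_assoc)
    have "(d \<otimes>\<^bsub>D\<^esub> inv\<^bsub>D\<^esub> d') [^]\<^bsub>D\<^esub> m = d [^]\<^bsub>D\<^esub> m \<otimes>\<^bsub>D\<^esub> inv\<^bsub>D\<^esub> P"
      unfolding P_def using D.nat_pow_distrib[of d "inv\<^bsub>D\<^esub> d'" m] D.nat_pow_inv[of d' m] that by simp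
    also have "\<dots> = (P \<otimes>\<^bsub>D\<^esub> W) \<otimes>\<^bsub>D\<^esub> inv\<^bsub>D\<^esub> P" using dm by simp
    also have "\<dots> = W" using Pc Wc D.m_comm[OF Pc Wc] by (simp add: D.m_assoc)
    finally have "(d \<otimes>\<^bsub>D\<^esub> inv\<^bsub>D\<^esub> d') [^]\<^bsub>D\<^esub> m = v' \<otimes>\<^bsub>D\<^esub> inv\<^bsub>D\<^esub> v" unfolding W_def .
    moreover have "v' \<otimes>\<^bsub>D\<^esub> inv\<^bsub>D\<^esub> v \<in> VV" using subgroup.m_closed[OF VVs that(4) subgroup.m_inv_closed[OF VVs that(3)]] .
    ultimately have "\<pi> (d \<otimes>\<^bsub>D\<^esub> inv\<^bsub>D\<^esub> d') = \<one>\<^bsub>A\<^esub>" using K that unfolding VV_def by auto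
    moreover have ds: "(d \<otimes>\<^bsub>D\<^esub> inv\<^bsub>D\<^esub> d') \<otimes>\<^bsub>D\<^esub> d' = d" using that by (simp add: D.m_assoc)
    moreover have "\<pi> d = \<pi> (d \<otimes>\<^bsub>D\<^esub> inv\<^bsub>D\<^esub> d') \<otimes>\<^bsub>A\<^esub> \<pi> d'"
      using pim[of "d \<otimes>\<^bsub>D\<^esub> inv\<^bsub>D\<^esub> d'" d'] ds that by simp
    ultimately show ?thesis using pic[OF that(2)] by simp
  qed
  define H where "H = {d [^]\<^bsub>D\<^esub> m \<otimes>\<^bsub>D\<^esub> v | d v. d \<in> carrier D \<and> v \<in> VV}"
  define \<psi> where "\<psi> y = x (\<pi> (SOME d. d \<in> carrier D \<and> (\<exists>v\<in>VV. y = d [^]\<^bsub>D\<^esub> m \<otimes>\<^bsub>D\<^esub> v)))" for y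
  have psi_eq: "\<psi> (d [^]\<^bsub>D\<^esub> m \<otimes>\<^bsub>D\<^esub> v) = x (\<pi> d)" if "d \<in> carrier D" "v \<in> VV" for d v
  proof -
    let ?P = "\<lambda>d'. d' \<in> carrier D \<and> (\<exists>v'\<in>VV. d [^]\<^bsub>D\<^esub> m \<otimes>\<^bsub>D\<^esub> v = d' [^]\<^bsub>D\<^esub> m \<otimes>\<^bsub>D\<^esub> v')"
    have "?P d" using that by blast
    hence "?P (SOME d. ?P d)" by (rule someI)
    then obtain v0 where v0: "(SOME d. ?P d) \<in> carrier D" "v0 \<in> VV"
      "d [^]\<^bsub>D\<^esub> m \<otimes>\<^bsub>D\<^esub> v = (SOME d. ?P d) [^]\<^bsub>D\<^esub> m \<otimes>\<^bsub>D\<^esub> v0" by blast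
    have "\<pi> d = \<pi> (SOME d. ?P d)" using wd[OF that(1) v0(1) that(2) v0(2) v0(3)] .
    thus ?thesis unfolding \<psi>_def by simp
  qed
  have Hsub: "subgroup H D"
  proof (rule D.subgroupI)
    show "H \<subseteq> carrier D" unfolding H_def using VVc by auto
    show "H \<noteq> {}" unfolding H_def using subgroup.one_closed[OF VVs] by blast
  next
    fix a b assume "a \<in> H" "b \<in> H"
    then obtain d v d' v' where a: "a = d [^]\<^bsub>D\<^esub> m \<otimes>\<^bsub>D\<^esub> v" "d \<in> carrier D" "v \<in> VV"
      and b: "b = d' [^]\<^bsub>D\<^esub> m \<otimes>\<^bsub>D\<^esub> v'" "d' \<in> carrier D" "v' \<in> VV" unfolding H_def by auto
    have vc2: "v \<in> carrier D" "v' \<in> carrier D" using a(3) b(3) VVc by auto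
    have "a \<otimes>\<^bsub>D\<^esub> b = (d [^]\<^bsub>D\<^esub> m \<otimes>\<^bsub>D\<^esub> d' [^]\<^bsub>D\<^esub> m) \<otimes>\<^bsub>D\<^esub> (v \<otimes>\<^bsub>D\<^esub> v')"
      unfolding a(1) b(1) using D.mult4[of "d [^]\<^bsub>D\<^esub> m" v "d' [^]\<^bsub>D\<^esub> m" v'] a b vc2 by simp
    hence "a \<otimes>\<^bsub>D\<^esub> b = (d \<otimes>\<^bsub>D\<^esub> d') [^]\<^bsub>D\<^esub> m \<otimes>\<^bsub>D\<^esub> (v \<otimes>\<^bsub>D\<^esub> v')"
      using D.nat_pow_distrib[of d d' m] a b by simp
    moreover have "d \<otimes>\<^bsub>D\<^esub> d' \<in> carrier D" "v \<otimes>\<^bsub>D\<^esub> v' \<in> VV"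
      using a b subgroup.m_closed[OF VVs a(3) b(3)] by auto
    ultimately show "a \<otimes>\<^bsub>D\<^esub> b \<in> H" unfolding H_def by blast
  next
    fix a assume "a \<in> H"
    then obtain d v where a: "a = d [^]\<^bsub>D\<^esub> m \<otimes>\<^bsub>D\<^esub> v" "d \<in> carrier D" "v \<in> VV" unfolding H_def by auto
    have "inv\<^bsub>D\<^esub> a = (inv\<^bsub>D\<^esub> d) [^]\<^bsub>D\<^esub> m \<otimes>\<^bsub>D\<^esub> inv\<^bsub>D\<^esub> v"
      using a D.inv_mult[of "d [^]\<^bsub>D\<^esub> m" v] D.nat_pow_inv[of d m] VVc by auto
    moreover have "inv\<^bsub>D\<^esub> d \<in> carrier D" "inv\<^bsub>D\<^esub> v \<in> VV"
      using a subgroup.m_inv_closed[OF VVs a(3)] by auto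
    ultimately show "inv\<^bsub>D\<^esub> a \<in> H" unfolding H_def by blast
  qed
  have chrH: "chr_on D H \<psi>" unfolding chr_on_def
  proof (intro conjI ballI)
    fix a b assume "a \<in> H" "b \<in> H"
    then obtain d v d' v' where a: "a = d [^]\<^bsub>D\<^esub> m \<otimes>\<^bsub>D\<^esub> v" "d \<in> carrier D" "v \<in> VV"
      and b: "b = d' [^]\<^bsub>D\<^esub> m \<otimes>\<^bsub>D\<^esub> v'" "d' \<in> carrier D" "v' \<in> VV" unfolding H_def by auto
    have vc2: "v \<in> carrier D" "v' \<in> carrier D" using a(3) b(3) VVc by auto
    have "a \<otimes>\<^bsub>D\<^esub> b = (d [^]\<^bsub>D\<^esub> m \<otimes>\<^bsub>D\<^esub> d' [^]\<^bsub>D\<^esub> m) \<otimes>\<^bsub>D\<^esub> (v \<otimes>\<^bsub>D\<^esub> v')"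
      unfolding a(1) b(1) using D.mult4[of "d [^]\<^bsub>D\<^esub> m" v "d' [^]\<^bsub>D\<^esub> m" v'] a b vc2 by simp
    hence "a \<otimes>\<^bsub>D\<^esub> b = (d \<otimes>\<^bsub>D\<^esub> d') [^]\<^bsub>D\<^esub> m \<otimes>\<^bsub>D\<^esub> (v \<otimes>\<^bsub>D\<^esub> v')"
      using D.nat_pow_distrib[of d d' m] a b by simp
    moreover have "v \<otimes>\<^bsub>D\<^esub> v' \<in> VV" using subgroup.m_closed[OF VVs a(3) b(3)] .
    ultimately show "\<psi> (a \<otimes>\<^bsub>D\<^esub> b) = \<psi> a * \<psi> b" using psi_eq a b pim xm pic by simp
  next
    fix a assume "a \<in> H"
    then obtain d v where a: "a = d [^]\<^bsub>D\<^esub> m \<otimes>\<^bsub>D\<^esub> v" "d \<in> carrier D" "v \<in> VV" unfolding H_def by auto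
    show "norm (\<psi> a) = 1" using a psi_eq xn pic by simp
  qed
  have powH: "\<exists>m'>0. g [^]\<^bsub>D\<^esub> (m'::nat) \<in> H" if "g \<in> carrier D" for g
  proof -
    have "g [^]\<^bsub>D\<^esub> m = g [^]\<^bsub>D\<^esub> m \<otimes>\<^bsub>D\<^esub> \<one>\<^bsub>D\<^esub>" using that by simp
    hence "g [^]\<^bsub>D\<^esub> m \<in> H" unfolding H_def using that subgroup.one_closed[OF VVs] by blast
    thus ?thesis using m0 by blast
  qed
  define cov where "cov f = {y \<in> topspace TD. inv\<^bsub>D\<^esub> f \<otimes>\<^bsub>D\<^esub> y \<in> VV}" for f
  have covo: "openin TD (cov f)" if "f \<in> carrier D" for f
    unfolding cov_def using openin_continuous_map_preimage[OF transl VVo] that by simp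
  have covin: "y \<in> cov y" if "y \<in> carrier D" for y
    unfolding cov_def using that topD subgroup.one_closed[OF VVs] by simp
  obtain F where F: "finite F" "F \<subseteq> carrier D" "carrier D \<subseteq> \<Union> (cov ` F)"
  proof -
    have "compactin TD (topspace TD)" using cpt by (simp add: compact_space_def)
    moreover have "\<forall>C\<in>cov ` carrier D. openin TD C" using covo by blast
    moreover have "topspace TD \<subseteq> \<Union> (cov ` carrier D)" using covin topD by blast
    ultimately obtain \<F> where "finite \<F>" "\<F> \<subseteq> cov ` carrier D" "topspace TD \<subseteq> \<Union> \<F>"
      unfolding compactin_def by meson
    then obtain C where "C \<subseteq> carrier D" "finite C" "\<F> = cov ` C" using finite_subset_image[of \<F> cov "carrier D"] by blast
    thus ?thesis using that \<open>topspace TD \<subseteq> \<Union> \<F>\<close> topD by blast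
  qed
  obtain H' c where H': "subgroup H' D" "H \<subseteq> H'" "F \<subseteq> H'" "chr_on D H' c" "\<forall>a\<in>H. c a = \<psi> a"
    using D.chr_ext_finite[OF F(1) F(2) Hsub chrH powH] by blast
  have VVH: "VV \<subseteq> H"
  proof
    fix v assume "v \<in> VV"
    hence "v = \<one>\<^bsub>D\<^esub> [^]\<^bsub>D\<^esub> m \<otimes>\<^bsub>D\<^esub> v" using VVc by auto
    thus "v \<in> H" unfolding H_def using \<open>v \<in> VV\<close> by blast
  qed
  have allH': "carrier D \<subseteq> H'"
  proof
    fix y assume y: "y \<in> carrier D"
    then obtain f where f: "f \<in> F" "inv\<^bsub>D\<^esub> f \<otimes>\<^bsub>D\<^esub> y \<in> VV" using F(3) unfolding cov_def by blast
    have fc: "f \<in> carrier D" using f F(2) by blast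
    obtain u where u: "u = inv\<^bsub>D\<^esub> f \<otimes>\<^bsub>D\<^esub> y" by blast
    have yeq: "y = f \<otimes>\<^bsub>D\<^esub> u" unfolding u using fc y by (simp add: D.m_assoc[symmetric])
    have "f \<in> H'" using f H'(3) by blast
    moreover have "u \<in> H'" using f VVH H'(2) u by blast
    ultimately have "f \<otimes>\<^bsub>D\<^esub> u \<in> H'" by (rule subgroup.m_closed[OF H'(1)])
    thus "y \<in> H'" using yeq by simp
  qed
  have cm: "c (a \<otimes>\<^bsub>D\<^esub> b) = c a * c b" if "a \<in> carrier D" "b \<in> carrier D" for a b
    using H'(4) allH' that unfolding chr_on_def by blast
  have cn: "norm (c a) = 1" if "a \<in> carrier D" for a
    using H'(4) allH' that unfolding chr_on_def by blast
  have cV: "c v = 1" if "v \<in> VV" for v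
  proof -
    have vc: "v \<in> carrier D" using that VVc by blast
    have "c v = \<psi> v" using H'(5) VVH that by blast
    also have "\<dots> = \<psi> (\<one>\<^bsub>D\<^esub> [^]\<^bsub>D\<^esub> m \<otimes>\<^bsub>D\<^esub> v)" using vc by simp
    also have "\<dots> = 1" using psi_eq[OF D.one_closed that] x1 pi_hom by (simp add: hom_one D.group_axioms A.group_axioms)
    finally show ?thesis .
  qed
  have chrD: "chr_on D (carrier D) c" unfolding chr_on_def using cm cn by blast
  have cont: "continuous_map TD (top_of_set (sphere (0::complex) 1)) c"
    unfolding continuous_map_def
  proof (intro conjI allI impI)
    show "c \<in> topspace TD \<rightarrow> topspace (top_of_set (sphere 0 1))" using cn topD by auto
  next
    fix W
    show "openin TD {y \<in> topspace TD. c y \<in> W}"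
    proof (subst openin_subopen, intro ballI)
      fix y assume y: "y \<in> {y \<in> topspace TD. c y \<in> W}"
      have "cov y \<subseteq> {y \<in> topspace TD. c y \<in> W}"
      proof
        fix z assume z: "z \<in> cov y"
        hence zc: "z \<in> carrier D" "inv\<^bsub>D\<^esub> y \<otimes>\<^bsub>D\<^esub> z \<in> VV" unfolding cov_def topD by auto
        have yc: "y \<in> carrier D" using y topD by auto
        obtain u where u: "u = inv\<^bsub>D\<^esub> y \<otimes>\<^bsub>D\<^esub> z" by blast
        have uc: "u \<in> carrier D" "u \<in> VV" using u zc yc by auto
        have "z = y \<otimes>\<^bsub>D\<^esub> u" unfolding u using zc yc by (simp add: D.m_assoc[symmetric])
        hence "c z = c y * c u" using cm[OF yc uc(1)] by simp
        hence "c z = c y" using cV[OF uc(2)] by simp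
        thus "z \<in> {y \<in> topspace TD. c y \<in> W}" using y zc topD by auto
      qed
      moreover have yc: "y \<in> carrier D" using y topD by auto
      ultimately show "\<exists>T. openin TD T \<and> y \<in> T \<and> T \<subseteq> {y \<in> topspace TD. c y \<in> W}"
        using covo[OF yc] covin[OF yc] by blast
    qed
  qed
  have "continuous_character D TD c" unfolding continuous_character_def using cont cm by blast
  moreover have "c d ^ (l ^ n) = x (\<pi> d)" if "d \<in> carrier D" for d
  proof -
    have "c d ^ (l ^ n) = c (d [^]\<^bsub>D\<^esub> m)" unfolding m_def
      using D.chr_pow[OF D.subgroup_self chrD that] by simp
    also have "\<dots> = \<psi> (d [^]\<^bsub>D\<^esub> m)"
    proof -
      have "d [^]\<^bsub>D\<^esub> m = d [^]\<^bsub>D\<^esub> m \<otimes>\<^bsub>D\<^esub> \<one>\<^bsub>D\<^esub>" using that by simp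
      hence "d [^]\<^bsub>D\<^esub> m \<in> H" unfolding H_def using that subgroup.one_closed[OF VVs] by blast
      thus ?thesis using H'(5) by blast
    qed
    also have "\<dots> = \<psi> (d [^]\<^bsub>D\<^esub> m \<otimes>\<^bsub>D\<^esub> \<one>\<^bsub>D\<^esub>)" using that by simp
    also have "\<dots> = x (\<pi> d)" using psi_eq that subgroup.one_closed[OF VVs] by blast
    finally show ?thesis .
  qed
  ultimately show ?thesis by blast
qed

end
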